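(* Let $\mathcal{D}$ be a distribution on $[n]$, $\varepsilon>0$, and let $\mathcal{P}$ be any bounded-derivative property of functions $f:[n]\to\mathbb{R}$. There is a tester for $\mathcal{P}$ with respect to $\mathcal{D}$ with proximity parameter $\varepsilon$ making $24\,\varepsilon^{-1}\Delta^*(\mathcal{D})$ queries.
   Context: A bounded-derivative property on $[n]$ is $\mathcal{P}=\{g:[n]\to\mathbb{R}: l(t)\le g(t+1)-g(t)\le u(t)\ \forall t\in[n-1]\}$ for some $l,u:[n-1]\to\mathbb{R}$ with $l(t)<u(t)$. A tester w.r.t. $\mathcal{D}$ with proximity parameter $\varepsilon$ knows $\mathcal{D}$, queries $f$, accepts with probability $>2/3$ if $f\in\mathcal{P}$ and rejects with probability $>2/3$ if $\min_{g\in\mathcal{P}}\Pr_{x\sim\mathcal{D}}[f(x)\ne g(x)]>\varepsilon$. $\Delta^*(\mathcal{D})$ is the minimum over binary search trees $T$ on $[n]$ of $\mathbb{E}_{v\sim\mathcal{D}}[\mathrm{depth}_T(v)]$, where depth is the number of edges to the root. *)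

theory Defs
  imports "HOL-Probability.Probability" "HOL-Library.Tree"
begin

definition in_bdp :: "nat \<Rightarrow> (nat \<Rightarrow> real) \<Rightarrow> (nat \<Rightarrow> real) \<Rightarrow> (nat \<Rightarrow> real) \<Rightarrow> bool" where
  "in_bdp n l u g \<longleftrightarrow> (\<forall>t\<in>{1..<n}. l t \<le> g (t+1) - g t \<and> g (t+1) - g t \<le> u t)"

definition dist_bdp :: "nat \<Rightarrow> (nat \<Rightarrow> real) \<Rightarrow> (nat \<Rightarrow> real) \<Rightarrow> nat pmf \<Rightarrow> (nat \<Rightarrow> real) \<Rightarrow> real" where
  "dist_bdp n l u D f = (INF g\<in>{g. in_bdp n l u g}. measure_pmf.prob D {x. f x \<noteq> g x})"

fun bst_depth :: "nat tree \<Rightarrow> nat \<Rightarrow> nat" where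
  "bst_depth Leaf v = 0"
| "bst_depth (Node l a r) v =
     (if v = a then 0 else if v < a then Suc (bst_depth l v) else Suc (bst_depth r v))"

definition bsts_on :: "nat \<Rightarrow> nat tree set" where
  "bsts_on n = {t. inorder t = [1..<n+1]}"

definition Delta_star :: "nat \<Rightarrow> nat pmf \<Rightarrow> real" where
  "Delta_star n D = Min ((\<lambda>t. measure_pmf.expectation D (\<lambda>v. real (bst_depth t v))) ` bsts_on n)"

text \<open>A deterministic adaptive query algorithm: either outputs a decision (True = accept)
  or queries a point x and continues depending on the real value f x.\<close>
datatype qalg = Out bool | Query nat "real \<Rightarrow> qalg"

primrec run :: "qalg \<Rightarrow> (nat \<Rightarrow> real) \<Rightarrow> bool" where
  "run (Out b) f = b"
| "run (Query x k) f = run (k (f x)) f"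

inductive at_most_queries :: "nat \<Rightarrow> qalg \<Rightarrow> bool" where
  "at_most_queries q (Out b)"
| "(\<And>r. at_most_queries q (k r)) \<Longrightarrow> at_most_queries (Suc q) (Query x k)"

definition is_tester :: "nat \<Rightarrow> (nat \<Rightarrow> real) \<Rightarrow> (nat \<Rightarrow> real) \<Rightarrow> nat pmf \<Rightarrow> real \<Rightarrow> nat \<Rightarrow> qalg pmf \<Rightarrow> bool" where
  "is_tester n l u D \<epsilon> q T \<longleftrightarrow>
     (\<forall>A\<in>set_pmf T. at_most_queries q A) \<and>
     (\<forall>f. in_bdp n l u f \<longrightarrow> measure_pmf.prob T {A. run A f} > 2/3) \<and>
     (\<forall>f. dist_bdp n l u D f > \<epsilon> \<longrightarrow> measure_pmf.prob T {A. \<not> run A f} > 2/3)"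

end

theory Submission
  imports Defs
begin


definition ext :: "nat \<Rightarrow> (nat \<Rightarrow> real) \<Rightarrow> (nat \<Rightarrow> real) \<Rightarrow> nat set \<Rightarrow> (nat \<Rightarrow> real) \<Rightarrow> bool" where
  "ext n l u A h \<longleftrightarrow> (\<exists>g. in_bdp n l u g \<and> (\<forall>x\<in>A. g x = h x))"

definition pcons :: "(nat \<Rightarrow> real) \<Rightarrow> (nat \<Rightarrow> real) \<Rightarrow> nat \<Rightarrow> nat \<Rightarrow> (nat \<Rightarrow> real) \<Rightarrow> bool" where
  "pcons l u a b h \<longleftrightarrow> (\<Sum>t\<in>{a..<b}. l t) \<le> h b - h a \<and> h b - h a \<le> (\<Sum>t\<in>{a..<b}. u t)"

lemma bdp_pcons:
  assumes g: "in_bdp n l u g" and "1 \<le> a" "a \<le> b" "b \<le> n"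
  shows "pcons l u a b g"
  using \<open>a \<le> b\<close> \<open>b \<le> n\<close>
proof (induction b rule: dec_induct)
  case base
  then show ?case by (simp add: pcons_def)
next
  case (step k)
  then have "pcons l u a k g" by simp
  moreover have "k \<in> {1..<n}" using step assms by auto
  then have "l k \<le> g (k+1) - g k \<and> g (k+1) - g k \<le> u k" using g by (auto simp: in_bdp_def)
  ultimately show ?case using step by (auto simp: pcons_def)
qed

lemma pcons_trans:
  assumes "pcons l u a b h" "pcons l u b c h" "a \<le> b" "b \<le> c"
  shows "pcons l u a c h"
proof -
  have "(\<Sum>t\<in>{a..<c}. l t) = (\<Sum>t\<in>{a..<b}. l t) + (\<Sum>t\<in>{b..<c}. l t)"
    using assms by (simp add: sum.atLeastLessThan_concat)
  moreover have "(\<Sum>t\<in>{a..<c}. u t) = (\<Sum>t\<in>{a..<b}. u t) + (\<Sum>t\<in>{b..<c}. u t)"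
    using assms by (simp add: sum.atLeastLessThan_concat)
  ultimately show ?thesis using assms by (auto simp: pcons_def)
qed

definition dd :: "(nat \<Rightarrow> real) \<Rightarrow> (nat \<Rightarrow> real) \<Rightarrow> nat \<Rightarrow> nat \<Rightarrow> real" where
  "dd l u a t = (if a \<le> t then (\<Sum>s\<in>{a..<t}. u s) else - (\<Sum>s\<in>{t..<a}. l s))"

lemma dd_up: "l t \<le> u t \<Longrightarrow> dd l u a (Suc t) \<le> dd l u a t + u t"
  by (cases "a \<le> t"; cases "a = Suc t")
     (auto simp: dd_def sum.atLeast_Suc_lessThan not_le)

lemma dd_down: "l t \<le> u t \<Longrightarrow> dd l u a t + l t \<le> dd l u a (Suc t)"
  by (cases "a \<le> t"; cases "a = Suc t")
     (auto simp: dd_def sum.atLeast_Suc_lessThan not_le)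

lemma extend:
  assumes fin: "finite A" and ne: "A \<noteq> {}" and lu: "\<forall>t\<in>{1..<n}. l t \<le> u t"
    and pc: "\<forall>a\<in>A. \<forall>b\<in>A. a \<le> b \<longrightarrow> pcons l u a b h"
  shows "ext n l u A h"
proof -
  define g where "g t = Min ((\<lambda>a. h a + dd l u a t) ` A)" for t
  have gle: "g t \<le> h a + dd l u a t" if "a \<in> A" for a t
    unfolding g_def using fin that by (intro Min_le) auto
  have gin: "\<exists>a\<in>A. g t = h a + dd l u a t" for t
  proof -
    have "g t \<in> (\<lambda>a. h a + dd l u a t) ` A" unfolding g_def using fin ne by (intro Min_in) auto
    then show ?thesis by blast
  qed
  have "in_bdp n l u g"
    unfolding in_bdp_def
  proof
    fix t assume t: "t \<in> {1..<n}"
    then have ltu: "l t \<le> u t" using lu by auto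
    obtain a where a: "a \<in> A" "g t = h a + dd l u a t" using gin by blast
    have 1: "g (t+1) \<le> g t + u t" using gle[OF a(1), of "Suc t"] dd_up[of l t u a, OF ltu] a by simp
    obtain b where b: "b \<in> A" "g (t+1) = h b + dd l u b (t+1)" using gin by blast
    have 2: "g t + l t \<le> g (t+1)" using gle[OF b(1), of t] dd_down[of l t u b, OF ltu] b by simp
    show "l t \<le> g (t + 1) - g t \<and> g (t + 1) - g t \<le> u t" using 1 2 by simp
  qed
  moreover have "g a = h a" if a: "a \<in> A" for a
  proof -
    have "g a \<le> h a" using gle[OF a, of a] by (simp add: dd_def)
    moreover obtain b where b: "b \<in> A" "g a = h b + dd l u b a" using gin by blast
    have "h b + dd l u b a \<ge> h a"
    proof (cases "b \<le> a")
      case True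
      then have "pcons l u b a h" using pc a b(1) by blast
      then show ?thesis using True by (auto simp: pcons_def dd_def)
    next
      case False
      then have "pcons l u a b h" using pc a b(1) by auto
      then show ?thesis using False by (auto simp: pcons_def dd_def)
    qed
    ultimately show ?thesis using b by simp
  qed
  ultimately show ?thesis unfolding ext_def by blast
qed



fun path :: "nat tree \<Rightarrow> nat \<Rightarrow> nat set" where
  "path Leaf v = {}"
| "path (Node l a r) v = insert a (if v = a then {} else if v < a then path l v else path r v)"

lemma path_finite: "finite (path t v)"
  by (induction t) auto

lemma path_sub: "path t v \<subseteq> set_tree t"
  by (induction t) auto

lemma path_card: "card (path t v) \<le> Suc (bst_depth t v)"
proof (induction t)
  case Leaf
  then show ?case by simp
next
  case (Node l a r)
  have "card (path (Node l a r) v) \<le> Suc (card (if v = a then {} else if v < a then path l v else path r v))"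
    by (simp add: card_insert_le_m1 path_finite card_insert_if)
  then show ?case using Node by (auto split: if_splits)
qed

lemma path_root: "a \<in> path (Node l a r) v"
  by simp

lemma path_self: "bst t \<Longrightarrow> v \<in> set_tree t \<Longrightarrow> v \<in> path t v"
  by (induction t) auto

lemma path_lca:
  "bst t \<Longrightarrow> x \<in> set_tree t \<Longrightarrow> y \<in> set_tree t \<Longrightarrow> x \<le> y \<Longrightarrow>
   \<exists>z\<in>path t x. z \<in> path t y \<and> x \<le> z \<and> z \<le> y"
proof (induction t)
  case Leaf
  then show ?case by simp
next
  case (Node l a r)
  show ?case
  proof (cases "x \<le> a \<and> a \<le> y")
    case True
    then show ?thesis by auto
  next
    case False
    then have "(x < a \<and> y < a) \<or> (a < x \<and> a < y)" using Node.prems by auto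
    then show ?thesis
    proof
      assume h: "x < a \<and> y < a"
      then have "x \<in> set_tree l" "y \<in> set_tree l" using Node.prems by auto
      then obtain z where "z \<in> path l x" "z \<in> path l y" "x \<le> z" "z \<le> y"
        using Node.IH(1) Node.prems by auto
      then show ?thesis using h by auto
    next
      assume h: "a < x \<and> a < y"
      then have "x \<in> set_tree r" "y \<in> set_tree r" using Node.prems by auto
      then obtain z where "z \<in> path r x" "z \<in> path r y" "x \<le> z" "z \<le> y"
        using Node.IH(2) Node.prems by auto
      then show ?thesis using h by auto
    qed
  qed
qed

lemma pcons_cong: "h a = h' a \<Longrightarrow> h b = h' b \<Longrightarrow> pcons l u a b h = pcons l u a b h'"
  by (simp add: pcons_def)

lemma ext_mono: "ext n l u A h \<Longrightarrow> B \<subseteq> A \<Longrightarrow> ext n l u B h"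
  unfolding ext_def by blast

lemma ext_pcons:
  assumes "ext n l u A h" "A \<subseteq> {1..n}" "a \<in> A" "b \<in> A" "a \<le> b"
  shows "pcons l u a b h"
proof -
  obtain g where g: "in_bdp n l u g" "\<forall>x\<in>A. g x = h x" using assms(1) unfolding ext_def by blast
  have "1 \<le> a" "b \<le> n" using assms by auto
  then have "pcons l u a b g" using bdp_pcons[OF g(1)] assms(5) by auto
  then show ?thesis using g(2) assms pcons_cong[of g a h b l u] by auto
qed

lemma good_ext:
  assumes bst: "bst t" and sub: "set_tree t \<subseteq> {1..n}" and lu: "\<forall>t\<in>{1..<n}. l t \<le> u t"
    and ne: "G \<noteq> {}"
    and G: "G = {x \<in> set_tree t. ext n l u (path t x) h}"
  shows "ext n l u G h"
proof (rule extend[OF _ ne lu])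
  show "finite G" using G by auto
  show "\<forall>a\<in>G. \<forall>b\<in>G. a \<le> b \<longrightarrow> pcons l u a b h"
  proof (intro ballI impI)
    fix x y assume x: "x \<in> G" and y: "y \<in> G" and xy: "x \<le> y"
    obtain z where z: "z \<in> path t x" "z \<in> path t y" "x \<le> z" "z \<le> y"
      using path_lca[OF bst, of x y] x y xy G by auto
    have ps: "path t v \<subseteq> {1..n}" for v using path_sub sub by blast
    have "pcons l u x z h"
      using ext_pcons[of n l u "path t x" h x z] x G ps z path_self[OF bst] by auto
    moreover have "pcons l u z y h"
      using ext_pcons[of n l u "path t y" h z y] y G ps z path_self[OF bst] by auto
    ultimately show "pcons l u x y h" using pcons_trans z by blast
  qed
qed

lemma ext_single:
  assumes lu: "\<forall>t\<in>{1..<n}. l t \<le> u t"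
  shows "ext n l u {a} h"
  by (rule extend[OF _ _ lu]) (auto simp: pcons_def)

lemma inorder_finite: "finite {t. inorder t = xs}"
proof (induction "length xs" arbitrary: xs rule: less_induct)
  case less
  let ?S = "{Leaf} \<union> (\<Union>i<length xs. (\<lambda>(l,r). Node l (xs!i) r) `
              ({t. inorder t = take i xs} \<times> {t. inorder t = drop (Suc i) xs}))"
  have "{t. inorder t = xs} \<subseteq> ?S"
  proof
    fix t assume "t \<in> {t. inorder t = xs}"
    then have t: "inorder t = xs" by simp
    show "t \<in> ?S"
    proof (cases t)
      case Leaf
      then show ?thesis by simp
    next
      case (Node l a r)
      let ?i = "length (inorder l)"
      have "?i < length xs" "xs ! ?i = a" "take ?i xs = inorder l" "drop (Suc ?i) xs = inorder r"
        using t Node by (auto simp: nth_append length_inorder)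
      then show ?thesis using Node by force
    qed
  qed
  moreover have "finite ?S"
  proof -
    have "finite ({t. inorder t = take i xs} \<times> {t. inorder t = drop (Suc i) xs})" if "i < length xs" for i
      using less that by (intro finite_cartesian_product) auto
    then show ?thesis by auto
  qed
  ultimately show ?case by (rule finite_subset)
qed

fun spine :: "nat list \<Rightarrow> nat tree" where
  "spine [] = Leaf"
| "spine (x # xs) = Node Leaf x (spine xs)"

lemma inorder_spine: "inorder (spine xs) = xs"
  by (induction xs) auto

lemma bsts_fin: "finite (bsts_on n)" and bsts_ne: "bsts_on n \<noteq> {}"
  unfolding bsts_on_def using inorder_finite inorder_spine by auto

lemma bsts_props:
  assumes "t \<in> bsts_on n"
  shows "bst t" "set_tree t = {1..n}"
proof -
  have i: "inorder t = [1..<n+1]" using assms by (simp add: bsts_on_def)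
  show "bst t" unfolding bst_iff_sorted_wrt_less i by (simp del: upt_Suc)
  show "set_tree t = {1..n}" by (metis i set_inorder set_upt atLeastLessThanSuc_atLeastAtMost Suc_eq_plus1)
qed

lemma Delta_attained:
  "\<exists>t\<in>bsts_on n. Delta_star n D = measure_pmf.expectation D (\<lambda>v. real (bst_depth t v))"
proof -
  have "Delta_star n D \<in> (\<lambda>t. measure_pmf.expectation D (\<lambda>v. real (bst_depth t v))) ` bsts_on n"
    unfolding Delta_star_def using bsts_fin bsts_ne by (intro Min_in) auto
  then show ?thesis by auto
qed



fun qa :: "nat list \<Rightarrow> (nat \<Rightarrow> real) \<Rightarrow> ((nat \<Rightarrow> real) \<Rightarrow> bool) \<Rightarrow> qalg" where
  "qa [] acc k = Out (k acc)"
| "qa (x # xs) acc k = Query x (\<lambda>r. qa xs (acc(x := r)) k)"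

lemma run_qa: "run (qa xs acc k) f = k (\<lambda>y. if y \<in> set xs then f y else acc y)"
proof (induction xs arbitrary: acc)
  case Nil
  then show ?case by simp
next
  case (Cons x xs)
  show ?case
  proof -
    have "(\<lambda>y. if y \<in> set xs then f y else (acc(x := f x)) y) = (\<lambda>y. if y \<in> set (x # xs) then f y else acc y)"
      by (auto simp: fun_eq_iff)
    moreover have "run (qa (x#xs) acc k) f = run (qa xs (acc(x:=f x)) k) f" by simp
    ultimately show ?thesis using Cons.IH[of "acc(x := f x)"] by metis
  qed
qed

lemma amq_qa: "at_most_queries (length xs) (qa xs acc k)"
  by (induction xs arbitrary: acc) (auto intro: at_most_queries.intros)

lemma amq_mono: "at_most_queries q A \<Longrightarrow> q \<le> q' \<Longrightarrow> at_most_queries q' A"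
proof (induction arbitrary: q' rule: at_most_queries.induct)
  case (1 q b)
  then show ?case by (auto intro: at_most_queries.intros)
next
  case (2 q k x)
  then obtain q'' where "q' = Suc q''" "q \<le> q''" by (cases q') auto
  then show ?case using 2 by (auto intro: at_most_queries.intros)
qed

lemma depth_height: "bst_depth t v \<le> height t"
  by (induction t) auto

lemma depth_integrable: "integrable (measure_pmf D) (\<lambda>v. real (bst_depth t v))"
  by (rule measure_pmf.integrable_const_bound[where B="real (height t)"])
     (auto simp: depth_height)

lemma depth_pos: "bst_depth (Node l a r) v = 0 \<longleftrightarrow> v = a"
  by simp

lemma dist_le:
  assumes "ext n l u G f" and "G' \<subseteq> G"
  shows "dist_bdp n l u D f \<le> measure_pmf.prob D (- G')"
proof -
  obtain g where g: "in_bdp n l u g" "\<forall>x\<in>G. g x = f x" using assms unfolding ext_def by blast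
  have "dist_bdp n l u D f \<le> measure_pmf.prob D {x. f x \<noteq> g x}"
    unfolding dist_bdp_def using g(1)
    by (intro cINF_lower) (auto intro: bdd_belowI[where m=0])
  also have "\<dots> \<le> measure_pmf.prob D (- G')"
    using g(2) assms(2) by (intro measure_pmf.finite_measure_mono) auto
  finally show ?thesis .
qed



lemma exp3: "exp (-3::real) \<le> 64/729"
proof -
  have "3/2 \<le> exp (1/2::real)" using exp_ge_add_one_self[of "1/2::real"] by simp
  then have "(3/2)^6 \<le> exp (1/2::real) ^ 6" by (intro power_mono) auto
  also have "\<dots> = exp (of_nat 6 * (1/2))" by (subst exp_of_nat_mult) simp
  finally have "729/64 \<le> exp (3::real)" by (simp add: power_divide)
  then show ?thesis by (simp add: exp_minus field_simps)
qed

theorem theorem4p3: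
  fixes n :: nat and D :: "nat pmf" and \<epsilon> :: real and l u :: "nat \<Rightarrow> real"
  assumes "set_pmf D \<subseteq> {1..n}"
    and "\<epsilon> > 0"
    and "\<forall>t\<in>{1..<n}. l t < u t"
  shows "\<exists>q T. real q \<le> 24 / \<epsilon> * Delta_star n D \<and> is_tester n l u D \<epsilon> q T"
proof -
  note supp = assms(1) and epos = assms(2)
  have lu: "\<forall>t\<in>{1..<n}. l t \<le> u t" using assms(3) by (simp add: less_imp_le)
  obtain t where tb: "t \<in> bsts_on n"
    and Deq: "Delta_star n D = measure_pmf.expectation D (\<lambda>v. real (bst_depth t v))"
    using Delta_attained by blast
  define \<Delta> where "\<Delta> = Delta_star n D"
  have bst: "bst t" and st: "set_tree t = {1..n}" using bsts_props[OF tb] by auto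
  obtain x0 where "x0 \<in> set_pmf D" using set_pmf_not_empty[of D] by auto
  then have "set_tree t \<noteq> {}" using supp st by auto
  then obtain l0 a r0 where tN: "t = Node l0 a r0" by (cases t) auto
  have Dpos: "\<Delta> \<ge> 0" unfolding \<Delta>_def Deq by (intro integral_nonneg_AE) auto
  define Gf where "Gf f = {x \<in> set_tree t. ext n l u (path t x) f}" for f
  have distG: "dist_bdp n l u D f \<le> measure_pmf.prob D (- Gf f)" for f
  proof -
    have "a \<in> Gf f" unfolding Gf_def using tN ext_single[OF lu] by simp
    then have "ext n l u (Gf f) f"
      using good_ext[OF bst _ lu, of "Gf f" f] st Gf_def by auto
    then show ?thesis by (rule dist_le) simp
  qed
  have GD: "measure_pmf.prob D (- Gf f) \<le> \<Delta>" for f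
  proof -
    have "measure_pmf.prob D (- Gf f) = measure_pmf.prob D (- Gf f \<inter> set_pmf D)"
      by (simp add: measure_Int_set_pmf)
    also have "\<dots> \<le> measure_pmf.prob D {x \<in> space (measure_pmf D). real (bst_depth t x) \<ge> 1}"
    proof (intro measure_pmf.finite_measure_mono)
      show "- Gf f \<inter> set_pmf D \<subseteq> {x \<in> space (measure_pmf D). real (bst_depth t x) \<ge> 1}"
      proof
        fix x assume x: "x \<in> - Gf f \<inter> set_pmf D"
        then have "x \<noteq> a" unfolding Gf_def using tN ext_single[OF lu] st supp by auto
        then show "x \<in> {x \<in> space (measure_pmf D). real (bst_depth t x) \<ge> 1}" using tN by simp
      qed
    qed auto
    also have "\<dots> \<le> \<Delta> / 1" unfolding \<Delta>_def Deq
      by (intro integral_Markov_inequality_measure depth_integrable) auto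
    finally show ?thesis by simp
  qed
  show ?thesis
  proof (cases "\<epsilon> < 1 \<and> \<Delta> > \<epsilon>")
    case False
    have "real 0 \<le> 24 / \<epsilon> * Delta_star n D" using Dpos epos unfolding \<Delta>_def by simp
    moreover have "is_tester n l u D \<epsilon> 0 (return_pmf (Out True))"
      unfolding is_tester_def
    proof (intro conjI allI impI)
      fix f assume "dist_bdp n l u D f > \<epsilon>"
      moreover have "dist_bdp n l u D f \<le> \<epsilon>"
        using False distG[of f] GD[of f] measure_pmf.prob_le_1[of D "- Gf f"] by (cases "\<epsilon> < 1"; linarith)
      ultimately show "measure_pmf.prob (return_pmf (Out True)) {A. \<not> run A f} > 2/3" by simp
    qed (auto intro: at_most_queries.intros)
    ultimately show ?thesis by blast
  next
    case True
    then have e1: "\<epsilon> < 1" and De: "\<Delta> > \<epsilon>" by auto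
    define s where "s = nat \<lceil>3 / \<epsilon>\<rceil>"
    define q where "q = nat \<lfloor>24 * \<Delta> / \<epsilon>\<rfloor>"
    have s_ge: "real s * \<epsilon> \<ge> 3" and s_le: "real s * \<epsilon> < 4"
    proof -
      have "real s = of_int \<lceil>3 / \<epsilon>\<rceil>" unfolding s_def using epos by simp
      then have "real s \<ge> 3 / \<epsilon>" "real s < 3 / \<epsilon> + 1" by linarith+
      then show "real s * \<epsilon> \<ge> 3" "real s * \<epsilon> < 4" using epos e1 by (auto simp: field_simps)
    qed
    have x24: "24 * \<Delta> / \<epsilon> > 24" using De epos by (simp add: field_simps)
    have q_le: "real q \<le> 24 / \<epsilon> * \<Delta>" and q_ge: "real q > 23 * \<Delta> / \<epsilon>"
    proof -
      have "real q = of_int \<lfloor>24 * \<Delta> / \<epsilon>\<rfloor>" unfolding q_def using x24 by simp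
      then have "real q \<le> 24 * \<Delta> / \<epsilon>" "real q > 24 * \<Delta> / \<epsilon> - 1" by linarith+
      then show "real q \<le> 24 / \<epsilon> * \<Delta>" "real q > 23 * \<Delta> / \<epsilon>"
        using x24 by (auto simp: field_simps)
    qed
    have qpos: "real q > 0" using q_ge De epos by (smt (verit) divide_pos_pos)
    define \<Omega> where "\<Omega> = Pi_pmf {..<s} 0 (\<lambda>_. D)"
    define S where "S \<omega> = (\<Union>i<s. path t (\<omega> i))" for \<omega> :: "nat \<Rightarrow> nat"
    have Sfin: "finite (S \<omega>)" for \<omega> unfolding S_def by (auto intro: path_finite)
    define alg where "alg \<omega> = (if card (S \<omega>) \<le> q
        then qa (sorted_list_of_set (S \<omega>)) (\<lambda>_. 0) (\<lambda>h. ext n l u (S \<omega>) h) else Out True)" for \<omega>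
    define T where "T = map_pmf alg \<Omega>"
    have run_alg: "run (alg \<omega>) f = (card (S \<omega>) \<le> q \<longrightarrow> ext n l u (S \<omega>) f)" for \<omega> f
    proof -
      have "ext n l u (S \<omega>) (\<lambda>y. if y \<in> set (sorted_list_of_set (S \<omega>)) then f y else 0)
            = ext n l u (S \<omega>) f"
        using Sfin[of \<omega>] unfolding ext_def by auto
      then show ?thesis unfolding alg_def by (simp add: run_qa)
    qed
    have "is_tester n l u D \<epsilon> q T"
      unfolding is_tester_def
    proof (intro conjI allI impI ballI)
      fix A assume "A \<in> set_pmf T"
      then obtain \<omega> where "A = alg \<omega>" unfolding T_def by auto
      then show "at_most_queries q A" unfolding alg_def
        using amq_mono[OF amq_qa[of "sorted_list_of_set (S \<omega>)"]] Sfin[of \<omega>]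
        by (auto intro: at_most_queries.intros)
    next
      fix f assume "in_bdp n l u f"
      then have "run (alg \<omega>) f" for \<omega> unfolding run_alg ext_def by blast
      then have "{A. run A f} \<supseteq> set_pmf T" unfolding T_def by auto
      then have "measure_pmf.prob T {A. run A f} = 1"
        by (simp add: measure_pmf.prob_eq_1 AE_measure_pmf_iff subset_eq)
      then show "measure_pmf.prob T {A. run A f} > 2/3" by simp
    next
      fix f assume dist: "dist_bdp n l u D f > \<epsilon>"
      define G where "G = Gf f"
      define \<beta> where "\<beta> = measure_pmf.prob D (- G)"
      have b_gt: "\<beta> > \<epsilon>" using dist distG[of f] unfolding \<beta>_def G_def by simp
      have b_le: "\<beta> \<le> 1" unfolding \<beta>_def by simp
      define Good where "Good = Pi {..<s} (\<lambda>_. G)"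
      define X where "X \<omega> = (\<Sum>i<s. real (bst_depth t (\<omega> i)))" for \<omega>
      define Big where "Big = {\<omega> \<in> space (measure_pmf \<Omega>). X \<omega> \<ge> real q}"
      have pGood: "measure_pmf.prob \<Omega> Good = (1 - \<beta>) ^ s"
      proof -
        have "measure_pmf.prob \<Omega> Good = (\<Prod>i<s. measure_pmf.prob D G)"
          unfolding \<Omega>_def Good_def by (rule measure_Pi_pmf_Pi) simp
        also have "measure_pmf.prob D G = 1 - \<beta>"
          unfolding \<beta>_def using measure_pmf.prob_compl[of G D] by (simp add: Compl_eq_Diff_UNIV)
        finally show ?thesis by simp
      qed
      have "(1 - \<beta>) ^ s \<le> exp (- \<beta>) ^ s"
        using exp_ge_add_one_self[of "-\<beta>"] b_le by (intro power_mono) auto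
      also have "\<dots> = exp (- (real s * \<beta>))" by (subst exp_of_nat_mult[symmetric]) simp
      also have "\<dots> \<le> exp (-3)"
      proof -
        have "real s * \<beta> \<ge> real s * \<epsilon>" using b_gt by (intro mult_left_mono) auto
        then show ?thesis using s_ge by simp
      qed
      also have "\<dots> \<le> 64/729" by (rule exp3)
      finally have pG: "measure_pmf.prob \<Omega> Good \<le> 64/729" using pGood by simp
      have EX: "measure_pmf.expectation \<Omega> X = real s * \<Delta>"
      proof -
        have "measure_pmf.expectation \<Omega> X = (\<Sum>i<s. measure_pmf.expectation \<Omega> (\<lambda>\<omega>. real (bst_depth t (\<omega> i))))"
          unfolding X_def by (rule Bochner_Integration.integral_sum)
             (auto intro: measure_pmf.integrable_const_bound[where B="real (height t)"] simp: depth_height)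
        also have "\<dots> = (\<Sum>i<s. \<Delta>)"
        proof (rule sum.cong)
          fix i assume i: "i \<in> {..<s}"
          have "measure_pmf.expectation \<Omega> (\<lambda>\<omega>. real (bst_depth t (\<omega> i)))
              = measure_pmf.expectation (map_pmf (\<lambda>\<omega>. \<omega> i) \<Omega>) (\<lambda>v. real (bst_depth t v))"
            by simp
          also have "map_pmf (\<lambda>\<omega>. \<omega> i) \<Omega> = D" unfolding \<Omega>_def using i
            by (subst Pi_pmf_component) auto
          finally show "measure_pmf.expectation \<Omega> (\<lambda>\<omega>. real (bst_depth t (\<omega> i))) = \<Delta>"
            unfolding \<Delta>_def Deq .
        qed simp
        finally show ?thesis by simp
      qed
      have Xb: "norm (X \<omega>) \<le> real s * real (height t)" for \<omega>
      proof -
        have "X \<omega> \<le> (\<Sum>i<s. real (height t))" unfolding X_def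
          by (intro sum_mono) (simp add: depth_height)
        moreover have "X \<omega> \<ge> 0" unfolding X_def by (intro sum_nonneg) simp
        ultimately show ?thesis by simp
      qed
      have Xi: "integrable (measure_pmf \<Omega>) X"
        by (rule measure_pmf.integrable_const_bound[where B="real s * real (height t)"]) (use Xb in \<open>auto intro: AE_I2\<close>)
      have pB: "measure_pmf.prob \<Omega> Big \<le> real s * \<Delta> / real q"
        unfolding Big_def EX[symmetric] using qpos Xi[unfolded X_def]
        by (intro integral_Markov_inequality_measure) (auto intro!: AE_I2 simp: X_def sum_nonneg)
      have "real s * \<Delta> / real q \<le> real s * \<epsilon> / 23"
      proof -
        have "\<Delta> * 23 \<le> \<epsilon> * real q" using q_ge epos by (simp add: field_simps)
        then have "real s * (\<Delta> * 23) \<le> real s * (\<epsilon> * real q)" by (intro mult_left_mono) auto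
        then show ?thesis using qpos by (simp add: field_simps)
      qed
      also have "\<dots> \<le> 4/23" using s_le by simp
      finally have pB': "measure_pmf.prob \<Omega> Big \<le> 4/23" by (rule order.trans[OF pB])
      have incl: "- (Good \<union> Big) \<inter> set_pmf \<Omega> \<subseteq> {\<omega>. \<not> run (alg \<omega>) f}"
      proof
        fix \<omega> assume w: "\<omega> \<in> - (Good \<union> Big) \<inter> set_pmf \<Omega>"
        then obtain i where i: "i < s" "\<omega> i \<notin> G" unfolding Good_def by auto
        have "\<omega> \<in> PiE_dflt {..<s} 0 (set_pmf \<circ> (\<lambda>_. D))"
          using w set_Pi_pmf_subset'[of "{..<s}" 0 "\<lambda>_. D"] unfolding \<Omega>_def by auto
        then have "\<omega> i \<in> set_pmf D" using i by (auto simp: PiE_dflt_def)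
        then have wi: "\<omega> i \<in> set_tree t" using supp st by auto
        then have ne: "\<not> ext n l u (path t (\<omega> i)) f" using i unfolding G_def Gf_def by auto
        have sub: "path t (\<omega> i) \<subseteq> S \<omega>" unfolding S_def using i by auto
        have "X \<omega> < real q" using w unfolding Big_def by auto
        then have Xn: "(\<Sum>j<s. bst_depth t (\<omega> j)) < q" unfolding X_def by (simp flip: of_nat_sum)
        have "S \<omega> \<subseteq> insert a (\<Union>j<s. path t (\<omega> j) - {a})" unfolding S_def by auto
        then have "card (S \<omega>) \<le> card (insert a (\<Union>j<s. path t (\<omega> j) - {a}))"
          by (intro card_mono) (auto intro: path_finite)
        also have "\<dots> \<le> Suc (card (\<Union>j<s. path t (\<omega> j) - {a}))" by (rule card_insert_le_m1) auto
        also have "card (\<Union>j<s. path t (\<omega> j) - {a}) \<le> (\<Sum>j<s. card (path t (\<omega> j) - {a}))"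
          by (rule card_UN_le) simp
        also have "\<dots> \<le> (\<Sum>j<s. bst_depth t (\<omega> j))"
        proof (rule sum_mono)
          fix j
          have "a \<in> path t (\<omega> j)" using tN by simp
          then show "card (path t (\<omega> j) - {a}) \<le> bst_depth t (\<omega> j)"
            using path_card[of t "\<omega> j"] path_finite[of t "\<omega> j"] by simp
        qed
        finally have "card (S \<omega>) \<le> q" using Xn by simp
        moreover have "\<not> ext n l u (S \<omega>) f" using ne sub ext_mono by blast
        ultimately show "\<omega> \<in> {\<omega>. \<not> run (alg \<omega>) f}" using run_alg by simp
      qed
      have "measure_pmf.prob T {A. \<not> run A f} = measure_pmf.prob \<Omega> {\<omega>. \<not> run (alg \<omega>) f}"
        unfolding T_def by simp
      also have "\<dots> \<ge> measure_pmf.prob \<Omega> (- (Good \<union> Big) \<inter> set_pmf \<Omega>)"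
        by (intro measure_pmf.finite_measure_mono incl) auto
      also have "measure_pmf.prob \<Omega> (- (Good \<union> Big) \<inter> set_pmf \<Omega>) = 1 - measure_pmf.prob \<Omega> (Good \<union> Big)"
        using measure_pmf.prob_compl[of "Good \<union> Big" \<Omega>]
        by (simp add: measure_Int_set_pmf Compl_eq_Diff_UNIV)
      finally have "measure_pmf.prob T {A. \<not> run A f} \<ge> 1 - measure_pmf.prob \<Omega> (Good \<union> Big)" .
      moreover have "measure_pmf.prob \<Omega> (Good \<union> Big) \<le> measure_pmf.prob \<Omega> Good + measure_pmf.prob \<Omega> Big"
        by (rule measure_Un_le) auto
      ultimately show "measure_pmf.prob T {A. \<not> run A f} > 2/3" using pG pB' by simp
    qed
    then show ?thesis using q_le unfolding \<Delta>_def by blast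
  qed
qed


end
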